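(* For all integers $n,m\ge 1$ with $n-1\le m\le \binom n2$, $$\tilde{r}(\mathcal C_{\mathrm{odd}},\mathcal{C}on_{n,m})\ge \varphi n + m-2\varphi+1,$$ where $\varphi=(1+\sqrt5)/2$ is the golden ratio.
   Context: Given nonempty families $\mathcal H_1,\mathcal H_2$ of finite graphs, the online size Ramsey game $\mathcal R(\mathcal H_1,\mathcal H_2)$ is played on the edge set of the infinite complete graph $K_{\mathbb N}$: in each round Builder selects a previously unselected edge and Painter colours it red or blue. The game ends as soon as, after Painter's move, there is a red copy of some graph in $\mathcal H_1$ or a blue copy of some graph in $\mathcal H_2$. Builder tries to end the game as soon as possible, Painter tries to delay it. The online size Ramsey number $\tilde r(\mathcal H_1,\mathcal H_2)$ is the number of rounds the game lasts when both players play optimally (for single graphs $H_i$ one writes $\tilde r(H_1,H_2)$). Here $\mathcal C_{\mathrm{odd}}$ is the family of all odd cycles and $\mathcal{C}on_{n,m}$ is the family of all connected graphs with exactly $n$ vertices and at least $m$ edges. *)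

theory Defs
  imports Complex_Main "HOL-Library.Extended_Real"
begin

text \<open>Graphs are pairs (V, E) with V a set of natural-number vertices and E a set of
  2-element subsets of V.  The host graph K_N has vertex set UNIV :: nat set.\<close>

type_synonym graph = "nat set \<times> nat set set"

definition is_edge :: "nat set \<Rightarrow> bool" where
  "is_edge e \<longleftrightarrow> (\<exists>u v. u \<noteq> v \<and> e = {u, v})"

definition finite_graph :: "graph \<Rightarrow> bool" where
  "finite_graph G \<longleftrightarrow> finite (fst G) \<and>
     snd G \<subseteq> {{u, v} | u v. u \<in> fst G \<and> v \<in> fst G \<and> u \<noteq> v}"

definition contains_copy :: "nat set set \<Rightarrow> graph \<Rightarrow> bool" where
  "contains_copy E H \<longleftrightarrow> (\<exists>f. inj_on f (fst H) \<and> (\<forall>e \<in> snd H. f ` e \<in> E))"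

definition connected_graph :: "graph \<Rightarrow> bool" where
  "connected_graph G \<longleftrightarrow> fst G \<noteq> {} \<and>
     (\<forall>u \<in> fst G. \<forall>v \<in> fst G. (u, v) \<in> {(x, y). {x, y} \<in> snd G}\<^sup>*)"

definition cycle_graph :: "nat \<Rightarrow> graph" where
  "cycle_graph k = ({0..<k}, {{i, (i + 1) mod k} | i. i < k})"

text \<open>The family of all odd cycles (up to isomorphism, which is irrelevant for copies).\<close>
definition C_odd :: "graph set" where
  "C_odd = {cycle_graph k | k. odd k \<and> k \<ge> 3}"

definition Con :: "nat \<Rightarrow> nat \<Rightarrow> graph set" where
  "Con n m = {G. finite_graph G \<and> connected_graph G \<and> card (fst G) = n \<and> card (snd G) \<ge> m}"

text \<open>A game position: (red edges, blue edges).\<close>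
definition game_over :: "graph set \<Rightarrow> graph set \<Rightarrow> nat set set \<times> nat set set \<Rightarrow> bool" where
  "game_over H1 H2 s \<longleftrightarrow> (\<exists>H \<in> H1. contains_copy (fst s) H) \<or> (\<exists>H \<in> H2. contains_copy (snd s) H)"

fun builder_wins :: "graph set \<Rightarrow> graph set \<Rightarrow> nat \<Rightarrow> nat set set \<times> nat set set \<Rightarrow> bool" where
  "builder_wins H1 H2 0 s = game_over H1 H2 s"
| "builder_wins H1 H2 (Suc k) s = (game_over H1 H2 s \<or>
     (\<exists>e. is_edge e \<and> e \<notin> fst s \<and> e \<notin> snd s \<and>
          builder_wins H1 H2 k (insert e (fst s), snd s) \<and>
          builder_wins H1 H2 k (fst s, insert e (snd s))))"

text \<open>Online size Ramsey number (infinity if Builder cannot force the end).\<close>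
definition online_ramsey :: "graph set \<Rightarrow> graph set \<Rightarrow> ereal" where
  "online_ramsey H1 H2 = Inf {ereal (real k) | k. builder_wins H1 H2 k ({}, {})}"

definition golden_ratio :: real where
  "golden_ratio = (1 + sqrt 5) / 2"

end

theory Submission
  imports Defs
begin


abbreviation "gr \<equiv> golden_ratio"

lemma gr_sq: "gr * gr = gr + 1"
proof -
  have s: "sqrt 5 * sqrt 5 = 5" by simp
  show ?thesis unfolding golden_ratio_def by (simp add: field_simps s)
qed

lemma gr_bounds: "1.6 < gr" "gr < 1.7"
proof -
  have a: "2.2 < sqrt (5::real)" by (rule real_less_rsqrt) (simp add: power2_eq_square)
  have b: "sqrt (5::real) < 2.4" by (rule real_less_lsqrt) (simp_all add: power2_eq_square)
  show "1.6 < gr" "gr < 1.7" unfolding golden_ratio_def using a b by simp_all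
qed

definition inR :: "real \<Rightarrow> real \<Rightarrow> bool" where
  "inR a b \<longleftrightarrow> 0 \<le> a \<and> 0 \<le> b \<and> b + gr * a \<ge> 2*gr + 1 \<and> a + gr * b \<ge> 2*gr + 1"

lemma inR_sym: "inR a b = inR b a" unfolding inR_def by auto

lemma inR_mono: "inR a b \<Longrightarrow> a \<le> a' \<Longrightarrow> b \<le> b' \<Longrightarrow> inR a' b'"
proof -
  assume h: "inR a b" "a \<le> a'" "b \<le> b'"
  have "gr * a \<le> gr * a'" using h(2) gr_bounds by (intro mult_left_mono) auto
  moreover have "gr * b \<le> gr * b'" using h(3) gr_bounds by (intro mult_left_mono) auto
  ultimately show ?thesis using h unfolding inR_def by linarith
qed



lemma core:
  fixes g p p' q q' :: real
  assumes gsq: "g*g = g+1" and g1: "1 < g"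
    and P1: "0 \<le> p" and P2: "0 \<le> p'" and P3: "p + g*p' \<ge> 2*g+1" and P4: "p' + g*p \<ge> 2*g"
    and P5: "p' + 2*g*p \<ge> 2*g+1"
    and Q1: "0 \<le> q" and Q2: "0 \<le> q'" and Q3: "q + g*q' \<ge> 2*g+1" and Q4: "q' + g*q \<ge> 2*g"
    and Q5: "q' + 2*g*q \<ge> 2*g+1"
  shows "(0 \<le> p + q' - (2*g-2) \<and> 0 \<le> p' + q - (2*g-2) \<and>
          (p' + q - (2*g-2)) + g*(p + q' - (2*g-2)) \<ge> 2*g+1 \<and>
          (p + q' - (2*g-2)) + g*(p' + q - (2*g-2)) \<ge> 2*g+1)
       \<or> (0 \<le> p + q - (2*g-1) \<and> 0 \<le> p' + q' - (2*g-2) \<and>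
          (p' + q' - (2*g-2)) + g*(p + q - (2*g-1)) \<ge> 2*g+1 \<and>
          (p + q - (2*g-1)) + g*(p' + q' - (2*g-2)) \<ge> 2*g+1)"
proof -
  have gk: "g*(2*g-2) = 2" using gsq by (simp add: algebra_simps)
  have e1: "g*(p + q' - (2*g-2)) = g*p + g*q' - 2" using gk by (simp add: algebra_simps)
  have e2: "g*(p' + q - (2*g-2)) = g*p' + g*q - 2" using gk by (simp add: algebra_simps)
  have e3: "g*(p + q - (2*g-1)) = g*p + g*q - 2 - g" using gk by (simp add: algebra_simps)
  have e4: "g*(p' + q' - (2*g-2)) = g*p' + g*q' - 2" using gk by (simp add: algebra_simps)
  have gpp: "g*(g*p') = g*p' + p'" using gsq by (metis distrib_right mult.assoc mult_1)
  have gqq: "g*(g*q') = g*q' + q'" using gsq by (metis distrib_right mult.assoc mult_1)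
  have m3: "g*(p + g*p') \<ge> g*(2*g+1)" using P3 g1 by (intro mult_left_mono) auto
  have n3: "g*(q + g*q') \<ge> g*(2*g+1)" using Q3 g1 by (intro mult_left_mono) auto
  have m3': "g*p + g*p' + p' \<ge> 3*g + 2" using m3 gpp gsq by (simp add: algebra_simps)
  have n3': "g*q + g*q' + q' \<ge> 3*g + 2" using n3 gqq gsq by (simp add: algebra_simps)
  have gp0: "g*p \<ge> 0" "g*q \<ge> 0" "g*p' \<ge> 0" "g*q' \<ge> 0" using P1 P2 Q1 Q2 g1 by auto
  have lt: "\<And>a. a < 2*g-2 \<Longrightarrow> g*a < 2" using gk g1 by (metis mult_strict_left_mono zero_less_one less_trans)
  show ?thesis
  proof (cases "0 \<le> p + q' - (2*g-2) \<and> 0 \<le> p' + q - (2*g-2)")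
    case True
    then show ?thesis unfolding e1 e2 using P3 P4 Q3 Q4 by auto
  next
    case False
    then consider (a) "p + q' < 2*g-2" | (b) "p' + q < 2*g-2" by linarith
    then show ?thesis
    proof cases
      case a
      have h: "g*(p+q') < 2" using lt[OF a] .
      hence h': "g*p + g*q' < 2" by (simp add: algebra_simps)
      have "p' \<ge> 2*g-2"
      proof (rule ccontr)
        assume "\<not> ?thesis" hence "g*p' < 2" using lt by auto
        thus False using P3 a Q2 by linarith
      qed
      thus ?thesis unfolding e3 e4 using h' P3 P5 Q3 n3' gp0 P1 Q2 by auto
    next
      case b
      have h: "g*(p'+q) < 2" using lt[OF b] .
      hence h': "g*p' + g*q < 2" by (simp add: algebra_simps)
      have "q' \<ge> 2*g-2"
      proof (rule ccontr)
        assume "\<not> ?thesis" hence "g*q' < 2" using lt by auto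
        thus False using Q3 b P2 by linarith
      qed
      thus ?thesis unfolding e3 e4 using h' P3 Q5 Q3 m3' gp0 Q1 P2 by auto
    qed
  qed
qed


definition good1 :: "real \<Rightarrow> real \<Rightarrow> bool" where
  "good1 p p' \<longleftrightarrow> inR p p' \<or> (p = gr - 1 \<and> p' = 2*gr - 1)"

lemma good1_weak:
  assumes "good1 p p'"
  shows "0 \<le> p" "0 \<le> p'" "p + gr*p' \<ge> 2*gr+1" "p' + gr*p \<ge> 2*gr" "p' + 2*gr*p \<ge> 2*gr+1"
proof -
  have g: "gr*gr = gr+1" "1.6 < gr" "gr < 1.7" using gr_sq gr_bounds by auto
  have c: "0 \<le> p \<and> 0 \<le> p' \<and> p + gr*p' \<ge> 2*gr+1 \<and> p' + gr*p \<ge> 2*gr \<and> p' + 2*gr*p \<ge> 2*gr+1"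
  proof (cases "inR p p'")
    case True
    hence "gr * p \<ge> 0" using g unfolding inR_def by auto
    thus ?thesis using True unfolding inR_def by auto
  next
    case False
    hence pp: "p = gr - 1" "p' = 2*gr - 1" using assms unfolding good1_def by auto
    have "gr*(2*gr-1) = gr + 2" using g by (simp add: algebra_simps)
    moreover have "gr*(gr-1) = 1" using g by (simp add: algebra_simps)
    ultimately show ?thesis unfolding pp using g by (simp add: algebra_simps)
  qed
  thus "0 \<le> p" "0 \<le> p'" "p + gr*p' \<ge> 2*gr+1" "p' + gr*p \<ge> 2*gr" "p' + 2*gr*p \<ge> 2*gr+1" by auto
qed

lemma closure:
  assumes "good1 p p'" "good1 q q'"
  shows "inR (p + q' - (2*gr - 2)) (p' + q - (2*gr - 2)) \<or> inR (p + q - (2*gr - 1)) (p' + q' - (2*gr - 2))"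
  using core[OF gr_sq _ good1_weak[OF assms(1)] good1_weak[OF assms(2)]] gr_bounds
  unfolding inR_def by auto



definition adjr :: "nat set set \<Rightarrow> (nat \<times> nat) set" where
  "adjr U = {(a,b). {a,b} \<in> U}"

definition cmp :: "nat set set \<Rightarrow> nat \<Rightarrow> nat set" where
  "cmp U x = {y. (x,y) \<in> (adjr U)\<^sup>*}"

lemma cmp_self[simp]: "x \<in> cmp U x" by (simp add: cmp_def)

lemma adjr_sym: "(a,b) \<in> adjr U \<Longrightarrow> (b,a) \<in> adjr U"
proof -
  assume "(a,b) \<in> adjr U"
  hence "{a,b} \<in> U" by (simp add: adjr_def)
  hence "{b,a} \<in> U" by (simp add: insert_commute)
  thus ?thesis by (simp add: adjr_def)
qed

lemma rt_sym: "(a,b) \<in> (adjr U)\<^sup>* \<Longrightarrow> (b,a) \<in> (adjr U)\<^sup>*"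
proof (induct rule: rtrancl_induct)
  case base then show ?case by simp
next
  case (step y z)
  show ?case by (rule converse_rtrancl_into_rtrancl[OF adjr_sym[OF step(2)] step(3)])
qed

lemma cmp_eq: "y \<in> cmp U x \<Longrightarrow> cmp U y = cmp U x"
proof -
  assume "y \<in> cmp U x"
  hence xy: "(x,y) \<in> (adjr U)\<^sup>*" by (simp add: cmp_def)
  hence yx: "(y,x) \<in> (adjr U)\<^sup>*" by (rule rt_sym)
  show ?thesis
  proof
    show "cmp U y \<subseteq> cmp U x"
    proof
      fix w assume "w \<in> cmp U y"
      hence "(y,w) \<in> (adjr U)\<^sup>*" by (simp add: cmp_def)
      hence "(x,w) \<in> (adjr U)\<^sup>*" using xy by (meson rtrancl_trans)
      thus "w \<in> cmp U x" by (simp add: cmp_def)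
    qed
    show "cmp U x \<subseteq> cmp U y"
    proof
      fix w assume "w \<in> cmp U x"
      hence "(x,w) \<in> (adjr U)\<^sup>*" by (simp add: cmp_def)
      hence "(y,w) \<in> (adjr U)\<^sup>*" using yx by (meson rtrancl_trans)
      thus "w \<in> cmp U y" by (simp add: cmp_def)
    qed
  qed
qed

lemma cmp_edge: "{a,b} \<in> U \<Longrightarrow> a \<in> cmp U z \<Longrightarrow> b \<in> cmp U z"
proof -
  assume h: "{a,b} \<in> U" "a \<in> cmp U z"
  have "(z,a) \<in> (adjr U)\<^sup>*" using h(2) by (simp add: cmp_def)
  moreover have "(a,b) \<in> adjr U" using h(1) by (simp add: adjr_def)
  ultimately have "(z,b) \<in> (adjr U)\<^sup>*" by (rule rtrancl_into_rtrancl)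
  thus ?thesis by (simp add: cmp_def)
qed

lemma cmp_edge': "{a,b} \<in> U \<Longrightarrow> (a \<in> cmp U z) = (b \<in> cmp U z)"
proof -
  assume h: "{a,b} \<in> U"
  have h2: "{b,a} \<in> U" using h by (simp add: insert_commute)
  show ?thesis using cmp_edge[OF h] cmp_edge[OF h2] by blast
qed

lemma cmp_disj: "y \<notin> cmp U x \<Longrightarrow> cmp U x \<inter> cmp U y = {}"
proof (rule ccontr)
  assume a: "y \<notin> cmp U x" "cmp U x \<inter> cmp U y \<noteq> {}"
  then obtain w where w: "w \<in> cmp U x" "w \<in> cmp U y" by auto
  have "cmp U w = cmp U x" "cmp U w = cmp U y" using cmp_eq[OF w(1)] cmp_eq[OF w(2)] by auto
  hence "y \<in> cmp U x" using cmp_self[of y U] by simp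
  thus False using a by simp
qed

lemma rt_closed: "(z,w) \<in> r\<^sup>* \<Longrightarrow> z \<in> S \<Longrightarrow> (\<And>a b. a \<in> S \<Longrightarrow> (a,b) \<in> r \<Longrightarrow> b \<in> S) \<Longrightarrow> w \<in> S"
  by (induct rule: rtrancl_induct) auto

lemma cmp_sub: "cmp U x \<subseteq> insert x (\<Union>U)"
proof
  fix w assume "w \<in> cmp U x"
  hence "(x,w) \<in> (adjr U)\<^sup>*" by (simp add: cmp_def)
  thus "w \<in> insert x (\<Union>U)"
  proof (rule rt_closed)
    fix a b assume "(a,b) \<in> adjr U"
    hence "{a,b} \<in> U" by (simp add: adjr_def)
    thus "b \<in> insert x (\<Union>U)" by blast
  qed simp
qed

lemma cmp_finite: "finite U \<Longrightarrow> \<forall>e\<in>U. finite e \<Longrightarrow> finite (cmp U x)"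
proof -
  assume "finite U" "\<forall>e\<in>U. finite e"
  hence "finite (insert x (\<Union>U))" by auto
  thus ?thesis using cmp_sub[of U x] by (rule finite_subset[rotated])
qed

lemma cmp_mono: "U \<subseteq> U' \<Longrightarrow> cmp U x \<subseteq> cmp U' x"
proof -
  assume "U \<subseteq> U'"
  hence "adjr U \<subseteq> adjr U'" by (auto simp: adjr_def)
  hence "(adjr U)\<^sup>* \<subseteq> (adjr U')\<^sup>*" by (rule rtrancl_mono)
  thus ?thesis unfolding cmp_def by auto
qed

lemma adjr_insert: "adjr (insert {x,y} U) = adjr U \<union> {(x,y),(y,x)}"
  unfolding adjr_def by (auto simp: doubleton_eq_iff insert_commute)

lemma cmp_insert_other:
  assumes "x \<notin> cmp U z" "y \<notin> cmp U z"
  shows "cmp (insert {x,y} U) z = cmp U z"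
proof
  show "cmp U z \<subseteq> cmp (insert {x,y} U) z" by (rule cmp_mono) auto
next
  show "cmp (insert {x,y} U) z \<subseteq> cmp U z"
  proof
    fix w assume "w \<in> cmp (insert {x,y} U) z"
    hence "(z,w) \<in> (adjr (insert {x,y} U))\<^sup>*" by (simp add: cmp_def)
    thus "w \<in> cmp U z"
    proof (rule rt_closed)
      fix a b assume a: "a \<in> cmp U z" and ab: "(a,b) \<in> adjr (insert {x,y} U)"
      show "b \<in> cmp U z"
      proof (cases "(a,b) \<in> adjr U")
        case True then have "{a,b} \<in> U" by (simp add: adjr_def)
        then show ?thesis using a by (rule cmp_edge)
      next
        case False then show ?thesis using ab a assms by (auto simp: adjr_insert)
      qed
    qed simp
  qed
qed

lemma cmp_insert_same:
  assumes "y \<in> cmp U x"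
  shows "cmp (insert {x,y} U) z = cmp U z"
proof
  show "cmp U z \<subseteq> cmp (insert {x,y} U) z" by (rule cmp_mono) auto
next
  show "cmp (insert {x,y} U) z \<subseteq> cmp U z"
  proof
    fix w assume "w \<in> cmp (insert {x,y} U) z"
    hence "(z,w) \<in> (adjr (insert {x,y} U))\<^sup>*" by (simp add: cmp_def)
    thus "w \<in> cmp U z"
    proof (rule rt_closed)
      fix a b assume a: "a \<in> cmp U z" and ab: "(a,b) \<in> adjr (insert {x,y} U)"
      show "b \<in> cmp U z"
      proof (cases "(a,b) \<in> adjr U")
        case True then have "{a,b} \<in> U" by (simp add: adjr_def)
        then show ?thesis using a by (rule cmp_edge)
      next
        case False
        hence "(a = x \<and> b = y) \<or> (a = y \<and> b = x)" using ab by (auto simp: adjr_insert)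
        moreover have "cmp U y = cmp U x" using assms cmp_eq by blast
        moreover have "x \<in> cmp U z \<Longrightarrow> y \<in> cmp U z" using assms cmp_eq[of x U z] cmp_eq[of y U x]
          by (metis cmp_self)
        moreover have "y \<in> cmp U z \<Longrightarrow> x \<in> cmp U z" using assms cmp_eq[of y U z] cmp_eq[of y U x]
          by (metis cmp_self)
        ultimately show ?thesis using a by blast
      qed
    qed simp
  qed
qed

lemma cmp_insert_merge:
  assumes "y \<notin> cmp U x" "z \<in> cmp U x \<union> cmp U y"
  shows "cmp (insert {x,y} U) z = cmp U x \<union> cmp U y"
proof
  let ?U = "insert {x,y} U"
  show "cmp ?U z \<subseteq> cmp U x \<union> cmp U y"
  proof
    fix w assume "w \<in> cmp ?U z"
    hence "(z,w) \<in> (adjr ?U)\<^sup>*" by (simp add: cmp_def)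
    thus "w \<in> cmp U x \<union> cmp U y"
    proof (rule rt_closed)
      fix a b assume a: "a \<in> cmp U x \<union> cmp U y" and ab: "(a,b) \<in> adjr ?U"
      show "b \<in> cmp U x \<union> cmp U y"
      proof (cases "(a,b) \<in> adjr U")
        case True then have "{a,b} \<in> U" by (simp add: adjr_def)
        then show ?thesis using a cmp_edge[of a b U x] cmp_edge[of a b U y] by blast
      next
        case False
        hence "(a = x \<and> b = y) \<or> (a = y \<and> b = x)" using ab by (auto simp: adjr_insert)
        then show ?thesis by auto
      qed
    qed (rule assms(2))
  qed
next
  let ?U = "insert {x,y} U"
  have xy: "y \<in> cmp ?U x" unfolding cmp_def adjr_def by auto
  have A: "cmp U x \<subseteq> cmp ?U x" by (rule cmp_mono) auto
  have B: "cmp U y \<subseteq> cmp ?U x" using cmp_mono[of U ?U y] cmp_eq[OF xy] by auto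
  have "z \<in> cmp ?U x" using A B assms(2) by auto
  hence "cmp ?U z = cmp ?U x" by (rule cmp_eq)
  thus "cmp U x \<union> cmp U y \<subseteq> cmp ?U z" using A B by auto
qed



definition sz :: "(nat \<Rightarrow> bool) \<Rightarrow> nat set \<Rightarrow> bool \<Rightarrow> nat" where
  "sz \<sigma> W t = card {v\<in>W. \<sigma> v = t}"

definition Dv :: "nat set set \<Rightarrow> nat set set \<Rightarrow> (nat \<Rightarrow> bool) \<Rightarrow> nat set \<Rightarrow> bool \<Rightarrow> nat" where
  "Dv R B \<sigma> W t = card {e\<in>R. e \<subseteq> W} + card {e\<in>B. e \<subseteq> W \<and> (\<forall>v\<in>e. \<sigma> v \<noteq> t)}"

definition ev :: "nat set set \<Rightarrow> nat set set \<Rightarrow> (nat \<Rightarrow> bool) \<Rightarrow> nat set \<Rightarrow> bool \<Rightarrow> real" where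
  "ev R B \<sigma> W t = real (Dv R B \<sigma> W t) - 1 - gr * (real (sz \<sigma> W t) - 2)"

definition good :: "nat set set \<Rightarrow> nat set set \<Rightarrow> (nat \<Rightarrow> bool) \<Rightarrow> bool" where
  "good R B \<sigma> \<longleftrightarrow> (\<forall>a b. {a,b} \<in> R \<longrightarrow> \<sigma> a \<noteq> \<sigma> b) \<and> (\<forall>a b. {a,b} \<in> B \<longrightarrow> \<sigma> a = \<sigma> b) \<and>
     (\<forall>z. cmp (R \<union> B) z = {z} \<or> inR (ev R B \<sigma> (cmp (R \<union> B) z) True) (ev R B \<sigma> (cmp (R \<union> B) z) False))"

definition Inv :: "nat set set \<Rightarrow> nat set set \<Rightarrow> bool" where
  "Inv R B \<longleftrightarrow> finite R \<and> finite B \<and> (\<forall>e\<in>R \<union> B. is_edge e) \<and> (\<exists>\<sigma>. good R B \<sigma>)"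

lemma is_edge_not_sub_single: "is_edge e \<Longrightarrow> \<not> e \<subseteq> {z}"
  unfolding is_edge_def by auto

lemma ev_single:
  assumes "\<forall>e\<in>R \<union> B. is_edge e"
  shows "ev R B \<sigma> {x} (\<sigma> x) = gr - 1" "ev R B \<sigma> {x} (\<not> \<sigma> x) = 2*gr - 1"
proof -
  have r: "{e\<in>R. e \<subseteq> {x}} = {}" using assms is_edge_not_sub_single by blast
  have b: "{e\<in>B. e \<subseteq> {x} \<and> (\<forall>v\<in>e. \<sigma> v \<noteq> t)} = {}" for t using assms is_edge_not_sub_single by blast
  have d: "Dv R B \<sigma> {x} t = 0" for t unfolding Dv_def r b by simp
  have "{v\<in>{x}. \<sigma> v = \<sigma> x} = {x}" by auto
  hence s1: "sz \<sigma> {x} (\<sigma> x) = 1" unfolding sz_def by (simp only:) simp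
  have s0: "sz \<sigma> {x} (\<not> \<sigma> x) = 0" unfolding sz_def by simp
  show "ev R B \<sigma> {x} (\<sigma> x) = gr - 1" unfolding ev_def d s1 by simp
  show "ev R B \<sigma> {x} (\<not> \<sigma> x) = 2*gr - 1" unfolding ev_def d s0 by simp
qed

lemma good1_of:
  assumes g: "good R B \<sigma>" and ed: "\<forall>e\<in>R \<union> B. is_edge e"
  shows "good1 (ev R B \<sigma> (cmp (R \<union> B) x) (\<sigma> x)) (ev R B \<sigma> (cmp (R \<union> B) x) (\<not> \<sigma> x))"
proof (cases "cmp (R \<union> B) x = {x}")
  case True
  then show ?thesis using ev_single[OF ed] unfolding good1_def by simp
next
  case False
  hence "inR (ev R B \<sigma> (cmp (R \<union> B) x) True) (ev R B \<sigma> (cmp (R \<union> B) x) False)"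
    using g unfolding good_def by blast
  then show ?thesis unfolding good1_def by (cases "\<sigma> x") (auto simp: inR_sym)
qed

lemma ev_mono:
  assumes "finite R'" "finite B'" "R \<subseteq> R'" "B \<subseteq> B'" "\<forall>v\<in>W. \<sigma>' v = \<sigma> v"
  shows "ev R B \<sigma> W t \<le> ev R' B' \<sigma>' W t"
proof -
  have "card {e\<in>R. e \<subseteq> W} \<le> card {e\<in>R'. e \<subseteq> W}"
    by (rule card_mono) (use assms in auto)
  moreover have "card {e\<in>B. e \<subseteq> W \<and> (\<forall>v\<in>e. \<sigma> v \<noteq> t)} \<le> card {e\<in>B'. e \<subseteq> W \<and> (\<forall>v\<in>e. \<sigma>' v \<noteq> t)}"
  proof (rule card_mono)
    show "finite {e\<in>B'. e \<subseteq> W \<and> (\<forall>v\<in>e. \<sigma>' v \<noteq> t)}" using assms by auto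
    show "{e\<in>B. e \<subseteq> W \<and> (\<forall>v\<in>e. \<sigma> v \<noteq> t)} \<subseteq> {e\<in>B'. e \<subseteq> W \<and> (\<forall>v\<in>e. \<sigma>' v \<noteq> t)}"
    proof
      fix e assume e: "e \<in> {e\<in>B. e \<subseteq> W \<and> (\<forall>v\<in>e. \<sigma> v \<noteq> t)}"
      hence "e \<in> B'" "e \<subseteq> W" using assms by auto
      moreover have "\<forall>v\<in>e. \<sigma>' v \<noteq> t"
      proof
        fix v assume "v \<in> e"
        hence "v \<in> W" "\<sigma> v \<noteq> t" using e by auto
        thus "\<sigma>' v \<noteq> t" using assms(5) by auto
      qed
      ultimately show "e \<in> {e\<in>B'. e \<subseteq> W \<and> (\<forall>v\<in>e. \<sigma>' v \<noteq> t)}" by auto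
    qed
  qed
  ultimately have "Dv R B \<sigma> W t \<le> Dv R' B' \<sigma>' W t" unfolding Dv_def by simp
  moreover have "sz \<sigma> W t = sz \<sigma>' W t" unfolding sz_def using assms(5) by (intro arg_cong[where f=card]) auto
  ultimately show ?thesis unfolding ev_def by simp
qed

lemma cnt_insert:
  assumes "finite E" "e0 \<notin> E"
  shows "card {e\<in>insert e0 E. Q e} = card {e\<in>E. Q e} + (if Q e0 then 1 else 0)"
proof (cases "Q e0")
  case True
  hence "{e\<in>insert e0 E. Q e} = insert e0 {e\<in>E. Q e}" by auto
  then show ?thesis using assms True by simp
next
  case False
  hence "{e\<in>insert e0 E. Q e} = {e\<in>E. Q e}" by auto
  then show ?thesis using False by simp
qed

lemma cnt_merge:
  assumes fin: "finite E" and edges: "\<forall>e\<in>E. is_edge e" and disj: "Wx \<inter> Wy = {}"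
    and clos: "\<forall>a b. {a,b} \<in> E \<longrightarrow> (a\<in>Wx \<longleftrightarrow> b\<in>Wx) \<and> (a \<in> Wy \<longleftrightarrow> b\<in>Wy)"
    and Px: "\<forall>e. e \<subseteq> Wx \<longrightarrow> (P e \<longleftrightarrow> P1 e)" and Py: "\<forall>e. e \<subseteq> Wy \<longrightarrow> (P e \<longleftrightarrow> P2 e)"
  shows "card {e\<in>E. e \<subseteq> Wx \<union> Wy \<and> P e} = card {e\<in>E. e \<subseteq> Wx \<and> P1 e} + card {e\<in>E. e \<subseteq> Wy \<and> P2 e}"
proof -
  have split: "e \<subseteq> Wx \<or> e \<subseteq> Wy" if "e \<in> E" "e \<subseteq> Wx \<union> Wy" for e
  proof -
    have "is_edge e" using edges that(1) by blast
    then obtain a b where ab: "e = {a,b}" "a \<noteq> b" unfolding is_edge_def by blast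
    have "{a,b} \<in> E" using that(1) ab by simp
    hence "(a\<in>Wx \<longleftrightarrow> b\<in>Wx) \<and> (a \<in> Wy \<longleftrightarrow> b\<in>Wy)" using clos by blast
    then show ?thesis using that(2) ab by auto
  qed
  have ne: "e \<noteq> {}" if "e \<in> E" for e
  proof -
    have "is_edge e" using edges that(1) by blast
    thus ?thesis unfolding is_edge_def by auto
  qed
  have eq: "{e\<in>E. e \<subseteq> Wx \<union> Wy \<and> P e} = {e\<in>E. e \<subseteq> Wx \<and> P1 e} \<union> {e\<in>E. e \<subseteq> Wy \<and> P2 e}"
  proof
    show "{e\<in>E. e \<subseteq> Wx \<union> Wy \<and> P e} \<subseteq> {e\<in>E. e \<subseteq> Wx \<and> P1 e} \<union> {e\<in>E. e \<subseteq> Wy \<and> P2 e}"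
    proof
      fix e assume e: "e \<in> {e\<in>E. e \<subseteq> Wx \<union> Wy \<and> P e}"
      hence e1: "e \<in> E" "e \<subseteq> Wx \<union> Wy" "P e" by auto
      from split[OF e1(1) e1(2)] show "e \<in> {e\<in>E. e \<subseteq> Wx \<and> P1 e} \<union> {e\<in>E. e \<subseteq> Wy \<and> P2 e}"
      proof
        assume "e \<subseteq> Wx" thus ?thesis using Px e1 by simp
      next
        assume "e \<subseteq> Wy" thus ?thesis using Py e1 by simp
      qed
    qed
    show "{e\<in>E. e \<subseteq> Wx \<and> P1 e} \<union> {e\<in>E. e \<subseteq> Wy \<and> P2 e} \<subseteq> {e\<in>E. e \<subseteq> Wx \<union> Wy \<and> P e}"
    proof
      fix e assume "e \<in> {e\<in>E. e \<subseteq> Wx \<and> P1 e} \<union> {e\<in>E. e \<subseteq> Wy \<and> P2 e}"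
      then consider "e \<in> E" "e \<subseteq> Wx" "P1 e" | "e \<in> E" "e \<subseteq> Wy" "P2 e" by auto
      then show "e \<in> {e\<in>E. e \<subseteq> Wx \<union> Wy \<and> P e}"
      proof cases
        case 1 thus ?thesis using Px by auto
      next
        case 2 thus ?thesis using Py by auto
      qed
    qed
  qed
  have dj: "{e\<in>E. e \<subseteq> Wx \<and> P1 e} \<inter> {e\<in>E. e \<subseteq> Wy \<and> P2 e} = {}"
  proof (rule ccontr)
    assume "\<not> ?thesis"
    then obtain e where "e \<in> E" "e \<subseteq> Wx" "e \<subseteq> Wy" by auto
    moreover then obtain v where "v \<in> e" using ne by blast
    ultimately show False using disj by auto
  qed
  show ?thesis unfolding eq using fin dj by (simp add: card_Un_disjoint)
qed



lemma is_edge_finite: "is_edge e \<Longrightarrow> finite e" unfolding is_edge_def by auto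

lemma xor_lemma: "((a::bool) \<noteq> f) \<noteq> t \<longleftrightarrow> a \<noteq> (t \<noteq> f)" by auto

lemma sz_merge:
  assumes "finite Wx" "finite Wy" "Wx \<inter> Wy = {}"
    and sd: "\<sigma>' = (\<lambda>v. if v \<in> Wy then (\<sigma> v \<noteq> fl) else \<sigma> v)"
  shows "sz \<sigma>' (Wx \<union> Wy) t = sz \<sigma> Wx t + sz \<sigma> Wy (t \<noteq> fl)"
proof -
  have eq: "{v\<in>Wx \<union> Wy. \<sigma>' v = t} = {v\<in>Wx. \<sigma> v = t} \<union> {v\<in>Wy. \<sigma> v = (t \<noteq> fl)}"
  proof
    show "{v\<in>Wx \<union> Wy. \<sigma>' v = t} \<subseteq> {v\<in>Wx. \<sigma> v = t} \<union> {v\<in>Wy. \<sigma> v = (t \<noteq> fl)}"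
      unfolding sd by auto
    show "{v\<in>Wx. \<sigma> v = t} \<union> {v\<in>Wy. \<sigma> v = (t \<noteq> fl)} \<subseteq> {v\<in>Wx \<union> Wy. \<sigma>' v = t}"
      unfolding sd using assms(3) by auto
  qed
  have "{v\<in>Wx. \<sigma> v = t} \<inter> {v\<in>Wy. \<sigma> v = (t \<noteq> fl)} = {}" using assms(3) by auto
  thus ?thesis unfolding sz_def eq using assms(1,2) by (simp add: card_Un_disjoint)
qed

locale mset =
  fixes R B :: "nat set set" and x y :: nat and \<sigma> \<sigma>' :: "nat \<Rightarrow> bool" and fl :: bool
  assumes finR: "finite R" and finB: "finite B" and edges: "\<forall>e\<in>R \<union> B. is_edge e"
    and yx: "y \<notin> cmp (R \<union> B) x" and nR: "{x,y} \<notin> R" and nB: "{x,y} \<notin> B"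
    and sd: "\<sigma>' = (\<lambda>v. if v \<in> cmp (R \<union> B) y then (\<sigma> v \<noteq> fl) else \<sigma> v)"
begin

abbreviation "U \<equiv> R \<union> B"
abbreviation "Wx \<equiv> cmp U x"
abbreviation "Wy \<equiv> cmp U y"

lemma disj: "Wx \<inter> Wy = {}" using cmp_disj[OF yx] .

lemma finW: "finite Wx" "finite Wy"
proof -
  have "\<forall>e\<in>U. finite e" using edges is_edge_finite by blast
  thus "finite Wx" "finite Wy" using cmp_finite finR finB by auto
qed

lemma clos: "\<forall>a b. {a,b} \<in> E \<longrightarrow> (a\<in>Wx \<longleftrightarrow> b\<in>Wx) \<and> (a \<in> Wy \<longleftrightarrow> b\<in>Wy)" if "E \<subseteq> U" for E
proof (intro allI impI)
  fix a b assume "{a,b} \<in> E"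
  hence "{a,b} \<in> U" using that by auto
  thus "(a\<in>Wx \<longleftrightarrow> b\<in>Wx) \<and> (a \<in> Wy \<longleftrightarrow> b\<in>Wy)" using cmp_edge' by blast
qed

lemma xW: "x \<in> Wx" "x \<notin> Wy" "y \<in> Wy" "y \<notin> Wx"
proof -
  show "x \<in> Wx" "y \<in> Wy" "y \<notin> Wx" using yx by auto
  show "x \<notin> Wy"
  proof
    assume "x \<in> Wy"
    hence "cmp U x = cmp U y" by (rule cmp_eq)
    thus False using yx cmp_self[of y U] by simp
  qed
qed

lemma sx: "\<sigma>' x = \<sigma> x" using xW sd by simp
lemma sy: "\<sigma>' y = (\<sigma> y \<noteq> fl)" using xW sd by simp

lemma e0W: "{x,y} \<subseteq> Wx \<union> Wy" using xW by auto

lemma red_part: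
  assumes "R' = R \<or> R' = insert {x,y} R"
  shows "card {e\<in>R'. e \<subseteq> Wx \<union> Wy} = card {e\<in>R. e \<subseteq> Wx} + card {e\<in>R. e \<subseteq> Wy} + (if R' = R then 0 else 1)"
proof -
  have EB: "\<forall>e\<in>R. is_edge e" using edges by auto
  have m: "card {e\<in>R. e \<subseteq> Wx \<union> Wy \<and> True} = card {e\<in>R. e \<subseteq> Wx \<and> True} + card {e\<in>R. e \<subseteq> Wy \<and> True}"
  proof (rule cnt_merge[OF finR EB disj])
    show "\<forall>a b. {a,b} \<in> R \<longrightarrow> (a\<in>Wx \<longleftrightarrow> b\<in>Wx) \<and> (a \<in> Wy \<longleftrightarrow> b\<in>Wy)" using clos[of R] by auto
  qed auto
  show ?thesis
  proof (cases "R' = R")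
    case True then show ?thesis using m by simp
  next
    case False
    hence R': "R' = insert {x,y} R" using assms by auto
    have "card {e\<in>insert {x,y} R. e \<subseteq> Wx \<union> Wy} = card {e\<in>R. e \<subseteq> Wx \<union> Wy} + (if {x,y} \<subseteq> Wx \<union> Wy then 1 else 0)"
      by (rule cnt_insert[OF finR nR])
    then show ?thesis using m e0W False R' by simp
  qed
qed

lemma blue_part:
  assumes "B' = B \<or> B' = insert {x,y} B"
  shows "card {e\<in>B'. e \<subseteq> Wx \<union> Wy \<and> (\<forall>v\<in>e. \<sigma>' v \<noteq> t)} =
     card {e\<in>B. e \<subseteq> Wx \<and> (\<forall>v\<in>e. \<sigma> v \<noteq> t)} + card {e\<in>B. e \<subseteq> Wy \<and> (\<forall>v\<in>e. \<sigma> v \<noteq> (t \<noteq> fl))}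
     + (if B' = B then 0 else (if \<sigma>' x \<noteq> t \<and> \<sigma>' y \<noteq> t then 1 else 0))"
proof -
  have EB: "\<forall>e\<in>B. is_edge e" using edges by auto
  have Px: "\<forall>e. e \<subseteq> Wx \<longrightarrow> ((\<forall>v\<in>e. \<sigma>' v \<noteq> t) \<longleftrightarrow> (\<forall>v\<in>e. \<sigma> v \<noteq> t))"
  proof (intro allI impI)
    fix e assume "e \<subseteq> Wx"
    hence "\<forall>v\<in>e. \<sigma>' v = \<sigma> v" using disj sd by auto
    thus "(\<forall>v\<in>e. \<sigma>' v \<noteq> t) \<longleftrightarrow> (\<forall>v\<in>e. \<sigma> v \<noteq> t)" by auto
  qed
  have Py: "\<forall>e. e \<subseteq> Wy \<longrightarrow> ((\<forall>v\<in>e. \<sigma>' v \<noteq> t) \<longleftrightarrow> (\<forall>v\<in>e. \<sigma> v \<noteq> (t \<noteq> fl)))"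
  proof (intro allI impI)
    fix e assume "e \<subseteq> Wy"
    hence "\<forall>v\<in>e. \<sigma>' v = (\<sigma> v \<noteq> fl)" using sd by auto
    thus "(\<forall>v\<in>e. \<sigma>' v \<noteq> t) \<longleftrightarrow> (\<forall>v\<in>e. \<sigma> v \<noteq> (t \<noteq> fl))" by auto
  qed
  have m: "card {e\<in>B. e \<subseteq> Wx \<union> Wy \<and> (\<forall>v\<in>e. \<sigma>' v \<noteq> t)} =
     card {e\<in>B. e \<subseteq> Wx \<and> (\<forall>v\<in>e. \<sigma> v \<noteq> t)} + card {e\<in>B. e \<subseteq> Wy \<and> (\<forall>v\<in>e. \<sigma> v \<noteq> (t \<noteq> fl))}"
  proof (rule cnt_merge[OF finB EB disj _ Px Py])
    show "\<forall>a b. {a,b} \<in> B \<longrightarrow> (a\<in>Wx \<longleftrightarrow> b\<in>Wx) \<and> (a \<in> Wy \<longleftrightarrow> b\<in>Wy)" using clos[of B] by auto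
  qed
  show ?thesis
  proof (cases "B' = B")
    case True then show ?thesis using m by simp
  next
    case False
    hence B': "B' = insert {x,y} B" using assms by auto
    have "card {e\<in>insert {x,y} B. e \<subseteq> Wx \<union> Wy \<and> (\<forall>v\<in>e. \<sigma>' v \<noteq> t)} =
       card {e\<in>B. e \<subseteq> Wx \<union> Wy \<and> (\<forall>v\<in>e. \<sigma>' v \<noteq> t)} + (if {x,y} \<subseteq> Wx \<union> Wy \<and> (\<forall>v\<in>{x,y}. \<sigma>' v \<noteq> t) then 1 else 0)"
      by (rule cnt_insert[OF finB nB])
    then show ?thesis using m e0W False B' by simp
  qed
qed

lemma ev_merge:
  assumes "R' = R \<or> R' = insert {x,y} R" "B' = B \<or> B' = insert {x,y} B"
  shows "ev R' B' \<sigma>' (Wx \<union> Wy) t = ev R B \<sigma> Wx t + ev R B \<sigma> Wy (t \<noteq> fl)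
     + (if R' = R then 0 else 1) + (if B' = B then 0 else (if \<sigma>' x \<noteq> t \<and> \<sigma>' y \<noteq> t then 1 else 0)) + 1 - 2*gr"
proof -
  have d: "Dv R' B' \<sigma>' (Wx \<union> Wy) t = Dv R B \<sigma> Wx t + Dv R B \<sigma> Wy (t \<noteq> fl)
     + (if R' = R then 0 else 1) + (if B' = B then 0 else (if \<sigma>' x \<noteq> t \<and> \<sigma>' y \<noteq> t then 1 else 0))"
    unfolding Dv_def using red_part[OF assms(1)] blue_part[OF assms(2), of t] by simp
  have s: "sz \<sigma>' (Wx \<union> Wy) t = sz \<sigma> Wx t + sz \<sigma> Wy (t \<noteq> fl)"
    by (rule sz_merge[OF finW disj sd])
  show ?thesis unfolding ev_def d s by (simp add: algebra_simps)
qed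

end



lemma same_good:
  assumes g: "good R B \<sigma>" and yx: "y \<in> cmp (R \<union> B) x"
    and sub: "R \<subseteq> R'" "B \<subseteq> B'" and un: "R' \<union> B' = insert {x,y} (R \<union> B)"
    and fin: "finite R'" "finite B'"
    and rc: "\<forall>a b. {a,b} \<in> R' \<longrightarrow> \<sigma> a \<noteq> \<sigma> b" and bc: "\<forall>a b. {a,b} \<in> B' \<longrightarrow> \<sigma> a = \<sigma> b"
  shows "good R' B' \<sigma>"
proof -
  have c: "\<forall>z. cmp (R' \<union> B') z = {z} \<or> inR (ev R' B' \<sigma> (cmp (R' \<union> B') z) True) (ev R' B' \<sigma> (cmp (R' \<union> B') z) False)"
  proof
    fix z
    have cz: "cmp (R' \<union> B') z = cmp (R \<union> B) z" unfolding un by (rule cmp_insert_same[OF yx])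
    have "cmp (R \<union> B) z = {z} \<or> inR (ev R B \<sigma> (cmp (R \<union> B) z) True) (ev R B \<sigma> (cmp (R \<union> B) z) False)"
      using g unfolding good_def by blast
    moreover have "ev R B \<sigma> (cmp (R \<union> B) z) t \<le> ev R' B' \<sigma> (cmp (R \<union> B) z) t" for t
      by (rule ev_mono[OF fin sub]) simp
    ultimately show "cmp (R' \<union> B') z = {z} \<or> inR (ev R' B' \<sigma> (cmp (R' \<union> B') z) True) (ev R' B' \<sigma> (cmp (R' \<union> B') z) False)"
      unfolding cz using inR_mono by blast
  qed
  show ?thesis unfolding good_def using rc bc c by blast
qed

context mset
begin

lemma merge_good:
  assumes g: "good R B \<sigma>"
    and cases: "(R' = R \<and> B' = insert {x,y} B \<and> \<sigma>' y = \<sigma>' x) \<or> (R' = insert {x,y} R \<and> B' = B \<and> \<sigma>' y \<noteq> \<sigma>' x)"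
    and inr: "inR (ev R' B' \<sigma>' (Wx \<union> Wy) True) (ev R' B' \<sigma>' (Wx \<union> Wy) False)"
  shows "good R' B' \<sigma>'"
proof -
  have un: "R' \<union> B' = insert {x,y} U" using cases by auto
  have sub: "R \<subseteq> R'" "B \<subseteq> B'" using cases by auto
  have fin: "finite R'" "finite B'" using cases finR finB by auto
  have sameW: "(a \<in> Wy) = (b \<in> Wy)" if "{a,b} \<in> U" for a b using cmp_edge'[OF that] by blast
  have sig: "\<sigma>' a \<noteq> \<sigma>' b \<longleftrightarrow> \<sigma> a \<noteq> \<sigma> b" if "{a,b} \<in> U" for a b
    using sameW[OF that] sd by auto
  have rc: "\<forall>a b. {a,b} \<in> R' \<longrightarrow> \<sigma>' a \<noteq> \<sigma>' b"
  proof (intro allI impI)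
    fix a b assume ab: "{a,b} \<in> R'"
    show "\<sigma>' a \<noteq> \<sigma>' b"
    proof (cases "{a,b} \<in> R")
      case True
      hence "\<sigma> a \<noteq> \<sigma> b" using g unfolding good_def by blast
      thus ?thesis using sig[of a b] True by blast
    next
      case False
      hence "{a,b} = {x,y}" "R' = insert {x,y} R" "\<sigma>' y \<noteq> \<sigma>' x" using ab cases by auto
      thus ?thesis by (auto simp: doubleton_eq_iff)
    qed
  qed
  have bc: "\<forall>a b. {a,b} \<in> B' \<longrightarrow> \<sigma>' a = \<sigma>' b"
  proof (intro allI impI)
    fix a b assume ab: "{a,b} \<in> B'"
    show "\<sigma>' a = \<sigma>' b"
    proof (cases "{a,b} \<in> B")
      case True
      hence "\<sigma> a = \<sigma> b" using g unfolding good_def by blast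
      thus ?thesis using sig[of a b] True by blast
    next
      case False
      hence "{a,b} = {x,y}" "B' = insert {x,y} B" "\<sigma>' y = \<sigma>' x" using ab cases by auto
      thus ?thesis by (auto simp: doubleton_eq_iff)
    qed
  qed
  have c: "\<forall>z. cmp (R' \<union> B') z = {z} \<or> inR (ev R' B' \<sigma>' (cmp (R' \<union> B') z) True) (ev R' B' \<sigma>' (cmp (R' \<union> B') z) False)"
  proof
    fix z
    show "cmp (R' \<union> B') z = {z} \<or> inR (ev R' B' \<sigma>' (cmp (R' \<union> B') z) True) (ev R' B' \<sigma>' (cmp (R' \<union> B') z) False)"
    proof (cases "z \<in> Wx \<union> Wy")
      case True
      have "cmp (R' \<union> B') z = Wx \<union> Wy" unfolding un by (rule cmp_insert_merge[OF yx True])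
      then show ?thesis using inr by simp
    next
      case False
      have nx: "x \<notin> cmp U z"
      proof
        assume "x \<in> cmp U z" hence "cmp U x = cmp U z" by (rule cmp_eq)
        thus False using False cmp_self[of z U] by blast
      qed
      have ny: "y \<notin> cmp U z"
      proof
        assume "y \<in> cmp U z" hence "cmp U y = cmp U z" by (rule cmp_eq)
        thus False using False cmp_self[of z U] by blast
      qed
      have cz: "cmp (R' \<union> B') z = cmp U z" unfolding un by (rule cmp_insert_other[OF nx ny])
      have agree: "\<forall>v\<in>cmp U z. \<sigma>' v = \<sigma> v"
      proof
        fix v assume v: "v \<in> cmp U z"
        have "v \<notin> Wy"
        proof
          assume "v \<in> Wy" hence "cmp U v = Wy" by (rule cmp_eq)
          moreover have "cmp U v = cmp U z" using v by (rule cmp_eq)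
          ultimately show False using False cmp_self[of z U] by blast
        qed
        thus "\<sigma>' v = \<sigma> v" using sd by simp
      qed
      have "cmp U z = {z} \<or> inR (ev R B \<sigma> (cmp U z) True) (ev R B \<sigma> (cmp U z) False)"
        using g unfolding good_def by blast
      moreover have "ev R B \<sigma> (cmp U z) t \<le> ev R' B' \<sigma>' (cmp U z) t" for t
        by (rule ev_mono[OF fin sub agree])
      ultimately show ?thesis unfolding cz using inR_mono by blast
    qed
  qed
  show ?thesis unfolding good_def using rc bc c by blast
qed

end

lemma step:
  assumes inv: "Inv R B" and ie: "is_edge e" and nR: "e \<notin> R" and nB: "e \<notin> B"
  shows "Inv (insert e R) B \<or> Inv R (insert e B)"
proof -
  obtain x y where e: "e = {x,y}" "x \<noteq> y" using ie unfolding is_edge_def by blast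
  obtain \<sigma> where g: "good R B \<sigma>" using inv unfolding Inv_def by blast
  have finR: "finite R" and finB: "finite B" and edges: "\<forall>e\<in>R \<union> B. is_edge e" using inv unfolding Inv_def by auto
  have edges': "\<forall>e'\<in>insert e R \<union> B. is_edge e'" "\<forall>e'\<in>R \<union> insert e B. is_edge e'" using edges ie by auto
  let ?U = "R \<union> B"
  show ?thesis
  proof (cases "y \<in> cmp ?U x")
    case True
    show ?thesis
    proof (cases "\<sigma> x = \<sigma> y")
      case True
      have "good R (insert e B) \<sigma>"
      proof (rule same_good[OF g \<open>y \<in> cmp ?U x\<close>])
        show "\<forall>a b. {a,b} \<in> R \<longrightarrow> \<sigma> a \<noteq> \<sigma> b" using g unfolding good_def by blast
        show "\<forall>a b. {a,b} \<in> insert e B \<longrightarrow> \<sigma> a = \<sigma> b"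
        proof (intro allI impI)
          fix a b assume "{a,b} \<in> insert e B"
          then consider "{a,b} = {x,y}" | "{a,b} \<in> B" using e by auto
          then show "\<sigma> a = \<sigma> b"
          proof cases
            case 1 thus ?thesis using True by (auto simp: doubleton_eq_iff)
          next
            case 2 thus ?thesis using g unfolding good_def by blast
          qed
        qed
      qed (use e finR finB in auto)
      hence "Inv R (insert e B)" unfolding Inv_def using finR finB edges'(2) by blast
      thus ?thesis by blast
    next
      case False
      have "good (insert e R) B \<sigma>"
      proof (rule same_good[OF g \<open>y \<in> cmp ?U x\<close>])
        show "\<forall>a b. {a,b} \<in> B \<longrightarrow> \<sigma> a = \<sigma> b" using g unfolding good_def by blast
        show "\<forall>a b. {a,b} \<in> insert e R \<longrightarrow> \<sigma> a \<noteq> \<sigma> b"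
        proof (intro allI impI)
          fix a b assume "{a,b} \<in> insert e R"
          then consider "{a,b} = {x,y}" | "{a,b} \<in> R" using e by auto
          then show "\<sigma> a \<noteq> \<sigma> b"
          proof cases
            case 1 thus ?thesis using False by (auto simp: doubleton_eq_iff)
          next
            case 2 thus ?thesis using g unfolding good_def by blast
          qed
        qed
      qed (use e finR finB in auto)
      hence "Inv (insert e R) B" unfolding Inv_def using finR finB edges'(1) by blast
      thus ?thesis by blast
    qed
  next
    case False
    have nR': "{x,y} \<notin> R" and nB': "{x,y} \<notin> B" using nR nB e by auto
    define p where "p = ev R B \<sigma> (cmp ?U x) (\<sigma> x)"
    define p' where "p' = ev R B \<sigma> (cmp ?U x) (\<not> \<sigma> x)"
    define q where "q = ev R B \<sigma> (cmp ?U y) (\<sigma> y)"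
    define q' where "q' = ev R B \<sigma> (cmp ?U y) (\<not> \<sigma> y)"
    have g1: "good1 p p'" "good1 q q'" unfolding p_def p'_def q_def q'_def
      using good1_of[OF g edges] by auto
    from closure[OF g1]
    show ?thesis
    proof
      assume red: "inR (p + q' - (2*gr - 2)) (p' + q - (2*gr - 2))"
      define fl where "fl = (\<sigma> y = \<sigma> x)"
      define \<sigma>' where "\<sigma>' = (\<lambda>v. if v \<in> cmp ?U y then (\<sigma> v \<noteq> fl) else \<sigma> v)"
      interpret M: mset R B x y \<sigma> \<sigma>' fl
        by unfold_locales (use finR finB edges False nR' nB' \<sigma>'_def in auto)
      have ne: "\<sigma>' y \<noteq> \<sigma>' x" using M.sx M.sy fl_def by auto
      have ev1: "ev (insert {x,y} R) B \<sigma>' (M.Wx \<union> M.Wy) (\<sigma> x) = p + q' - (2*gr - 2)"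
        using M.ev_merge[of "insert {x,y} R" B "\<sigma> x"] nR' unfolding p_def q'_def fl_def
        by (cases "\<sigma> x"; cases "\<sigma> y") auto
      have ev2: "ev (insert {x,y} R) B \<sigma>' (M.Wx \<union> M.Wy) (\<not> \<sigma> x) = p' + q - (2*gr - 2)"
        using M.ev_merge[of "insert {x,y} R" B "\<not> \<sigma> x"] nR' unfolding p'_def q_def fl_def
        by (cases "\<sigma> x"; cases "\<sigma> y") auto
      have "inR (ev (insert {x,y} R) B \<sigma>' (M.Wx \<union> M.Wy) True) (ev (insert {x,y} R) B \<sigma>' (M.Wx \<union> M.Wy) False)"
        using red ev1 ev2 by (cases "\<sigma> x") (auto simp: inR_sym)
      hence "good (insert {x,y} R) B \<sigma>'" using M.merge_good[OF g] ne by blast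
      hence "Inv (insert e R) B" unfolding Inv_def using finR finB edges'(1) e by blast
      thus ?thesis by blast
    next
      assume blue: "inR (p + q - (2*gr - 1)) (p' + q' - (2*gr - 2))"
      define fl where "fl = (\<sigma> y \<noteq> \<sigma> x)"
      define \<sigma>' where "\<sigma>' = (\<lambda>v. if v \<in> cmp ?U y then (\<sigma> v \<noteq> fl) else \<sigma> v)"
      interpret M: mset R B x y \<sigma> \<sigma>' fl
        by unfold_locales (use finR finB edges False nR' nB' \<sigma>'_def in auto)
      have eq: "\<sigma>' y = \<sigma>' x" using M.sx M.sy fl_def by auto
      have ev1: "ev R (insert {x,y} B) \<sigma>' (M.Wx \<union> M.Wy) (\<sigma> x) = p + q - (2*gr - 1)"
        using M.ev_merge[of R "insert {x,y} B" "\<sigma> x"] nB' M.sx M.sy unfolding p_def q_def fl_def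
        by (cases "\<sigma> x"; cases "\<sigma> y") auto
      have ev2: "ev R (insert {x,y} B) \<sigma>' (M.Wx \<union> M.Wy) (\<not> \<sigma> x) = p' + q' - (2*gr - 2)"
        using M.ev_merge[of R "insert {x,y} B" "\<not> \<sigma> x"] nB' M.sx M.sy unfolding p'_def q'_def fl_def
        by (cases "\<sigma> x"; cases "\<sigma> y") auto
      have "inR (ev R (insert {x,y} B) \<sigma>' (M.Wx \<union> M.Wy) True) (ev R (insert {x,y} B) \<sigma>' (M.Wx \<union> M.Wy) False)"
        using blue ev1 ev2 by (cases "\<sigma> x") (auto simp: inR_sym)
      hence "good R (insert {x,y} B) \<sigma>'" using M.merge_good[OF g] eq by blast
      hence "Inv R (insert e B)" unfolding Inv_def using finR finB edges'(2) e by blast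
      thus ?thesis by blast
    qed
  qed
qed



lemma no_red_odd:
  assumes g: "good R B \<sigma>" and k: "odd k" "k \<ge> 3"
  shows "\<not> contains_copy R (cycle_graph k)"
proof
  assume "contains_copy R (cycle_graph k)"
  then obtain f where f: "\<forall>e\<in>snd (cycle_graph k). f ` e \<in> R" unfolding contains_copy_def by blast
  have adj: "\<sigma> (f i) \<noteq> \<sigma> (f ((i+1) mod k))" if "i < k" for i
  proof -
    have "{i, (i+1) mod k} \<in> snd (cycle_graph k)" unfolding cycle_graph_def using that by auto
    hence "f ` {i, (i+1) mod k} \<in> R" using f by blast
    hence "{f i, f ((i+1) mod k)} \<in> R" by simp
    thus ?thesis using g unfolding good_def by blast
  qed
  have alt: "i < k \<Longrightarrow> \<sigma> (f i) = (if even i then \<sigma> (f 0) else \<not> \<sigma> (f 0))" for i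
  proof (induct i)
    case 0 then show ?case by simp
  next
    case (Suc i)
    have "(i+1) mod k = i+1" using Suc.prems by simp
    hence "\<sigma> (f i) \<noteq> \<sigma> (f (Suc i))" using adj[of i] Suc.prems by simp
    then show ?case using Suc by auto
  qed
  have km: "k - 1 < k" "even (k-1)" using k by auto
  have "\<sigma> (f (k-1)) = \<sigma> (f 0)" using alt[OF km(1)] km(2) by simp
  moreover have "(k - 1 + 1) mod k = 0" using k by simp
  ultimately show False using adj[OF km(1)] by simp
qed

lemma blue_bound:
  assumes inv: "Inv R B" and H: "H \<in> Con n m" and cc: "contains_copy B H" and m1: "m \<ge> 1"
  shows "real (card R + card B) \<ge> gr * real n + real m - 2*gr + 1"
proof -
  obtain \<sigma> where g: "good R B \<sigma>" using inv unfolding Inv_def by blast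
  have finR: "finite R" and finB: "finite B" and edges: "\<forall>e\<in>R \<union> B. is_edge e" using inv unfolding Inv_def by auto
  obtain V E where HVE: "H = (V, E)" by (cases H)
  have finV: "finite V" and Esub: "E \<subseteq> {{u, v} | u v. u \<in> V \<and> v \<in> V \<and> u \<noteq> v}"
    and Vne: "V \<noteq> {}" and conn: "\<forall>u\<in>V. \<forall>v\<in>V. (u, v) \<in> {(x, y). {x, y} \<in> E}\<^sup>*"
    and cV: "card V = n" and cE: "card E \<ge> m"
    using H unfolding HVE Con_def finite_graph_def connected_graph_def by auto
  obtain f where inj: "inj_on f V" and fE: "\<forall>e\<in>E. f ` e \<in> B" using cc unfolding contains_copy_def HVE by auto
  obtain u0 where u0: "u0 \<in> V" using Vne by blast
  let ?U = "R \<union> B"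
  define W where "W = cmp ?U (f u0)"
  define t where "t = \<sigma> (f u0)"
  have reach: "f v \<in> W \<and> \<sigma> (f v) = t" if "v \<in> V" for v
  proof -
    have "(u0, v) \<in> {(x, y). {x, y} \<in> E}\<^sup>*" using conn u0 that by blast
    thus ?thesis
    proof (induct rule: rtrancl_induct)
      case base then show ?case unfolding W_def t_def by simp
    next
      case (step a b)
      have "{a,b} \<in> E" using step(2) by simp
      hence "f ` {a,b} \<in> B" using fE by blast
      hence fab: "{f a, f b} \<in> B" by simp
      hence "\<sigma> (f a) = \<sigma> (f b)" using g unfolding good_def by blast
      moreover have "f b \<in> W" using cmp_edge[of "f a" "f b" ?U "f u0"] fab step(3) unfolding W_def by blast
      ultimately show ?case using step(3) by simp
    qed
  qed
  have finW: "finite W"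
  proof -
    have "\<forall>e\<in>?U. finite e" using edges is_edge_finite by blast
    thus ?thesis unfolding W_def using cmp_finite finR finB by auto
  qed
  have Ene: "E \<noteq> {}" using cE m1 by auto
  then obtain e1 where e1: "e1 \<in> E" by blast
  then obtain a b where ab: "e1 = {a,b}" "a \<in> V" "b \<in> V" "a \<noteq> b" using Esub by blast
  have fab: "f a \<noteq> f b" using inj ab unfolding inj_on_def by blast
  have notsing: "W \<noteq> {f u0}" using reach[OF ab(2)] reach[OF ab(3)] fab by auto
  have "inR (ev R B \<sigma> W True) (ev R B \<sigma> W False)"
    using g notsing unfolding good_def W_def by blast
  hence ev0: "ev R B \<sigma> W t \<ge> 0" unfolding inR_def by (cases t) auto
  have szn: "sz \<sigma> W t \<ge> n"
  proof -
    have "f ` V \<subseteq> {v\<in>W. \<sigma> v = t}" using reach by blast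
    hence "card (f ` V) \<le> card {v\<in>W. \<sigma> v = t}" using finW by (intro card_mono) auto
    moreover have "card (f ` V) = n" using card_image[OF inj] cV by simp
    ultimately show ?thesis unfolding sz_def by simp
  qed
  define BT where "BT = {e\<in>B. e \<subseteq> W \<and> (\<forall>v\<in>e. \<sigma> v = t)}"
  define BN where "BN = {e\<in>B. e \<subseteq> W \<and> (\<forall>v\<in>e. \<sigma> v \<noteq> t)}"
  have EV: "e \<subseteq> V" if "e \<in> E" for e using Esub that by blast
  have BTm: "card BT \<ge> m"
  proof -
    have "(\<lambda>e. f ` e) ` E \<subseteq> BT"
    proof
      fix e' assume "e' \<in> (\<lambda>e. f ` e) ` E"
      then obtain e where e: "e \<in> E" "e' = f ` e" by blast
      have "f ` e \<in> B" using fE e(1) by blast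
      moreover have "f ` e \<subseteq> W" "\<forall>v\<in>f ` e. \<sigma> v = t" using reach EV[OF e(1)] by blast+
      ultimately show "e' \<in> BT" unfolding BT_def e(2) by blast
    qed
    moreover have "finite BT" unfolding BT_def using finB by simp
    ultimately have "card ((\<lambda>e. f ` e) ` E) \<le> card BT" by (rule card_mono[rotated])
    moreover have "inj_on (\<lambda>e. f ` e) E"
    proof (rule inj_onI)
      fix e e' assume "e \<in> E" "e' \<in> E" "f ` e = f ` e'"
      thus "e = e'" using inj_on_image_eq_iff[OF inj] EV by blast
    qed
    ultimately show ?thesis using card_image cE by fastforce
  qed
  have ne: "e \<noteq> {}" if "e \<in> B" for e
  proof -
    have "is_edge e" using edges that by blast
    thus ?thesis unfolding is_edge_def by auto
  qed
  have dj: "BN \<inter> BT = {}"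
  proof (rule ccontr)
    assume "BN \<inter> BT \<noteq> {}"
    then obtain e where "e \<in> BN" "e \<in> BT" by blast
    moreover then obtain v where "v \<in> e" using ne unfolding BN_def by blast
    ultimately show False unfolding BN_def BT_def by blast
  qed
  have "card BN + card BT = card (BN \<union> BT)" using dj finB unfolding BN_def BT_def
    by (simp add: card_Un_disjoint)
  also have "\<dots> \<le> card B" unfolding BN_def BT_def using finB by (intro card_mono) auto
  finally have cB: "card BN + card BT \<le> card B" .
  have cR: "card {e\<in>R. e \<subseteq> W} \<le> card R" using finR by (intro card_mono) auto
  have D: "Dv R B \<sigma> W t + m \<le> card R + card B" using cB cR BTm unfolding Dv_def BN_def by simp
  have "gr * (real n - 2) \<le> gr * (real (sz \<sigma> W t) - 2)"
    using szn gr_bounds by (intro mult_left_mono) auto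
  hence "real (Dv R B \<sigma> W t) \<ge> 1 + gr * (real n - 2)" using ev0 unfolding ev_def by linarith
  moreover have "real (Dv R B \<sigma> W t) + real m \<le> real (card R + card B)" using D by linarith
  ultimately show ?thesis by (simp add: algebra_simps)
qed

lemma game:
  assumes "Inv R B" "builder_wins C_odd (Con n m) k (R, B)" "m \<ge> 1"
  shows "real (card R + card B + k) \<ge> gr * real n + real m - 2*gr + 1"
  using assms
proof (induct k arbitrary: R B)
  case 0
  obtain \<sigma> where g: "good R B \<sigma>" using 0 unfolding Inv_def by blast
  have "\<not> (\<exists>H\<in>C_odd. contains_copy R H)" using no_red_odd[OF g] unfolding C_odd_def by blast
  then obtain H where "H \<in> Con n m" "contains_copy B H" using 0 by (auto simp: game_over_def)
  then show ?case using blue_bound[OF 0(1) _ _ 0(3)] by simp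
next
  case (Suc k)
  obtain \<sigma> where g: "good R B \<sigma>" using Suc unfolding Inv_def by blast
  have finR: "finite R" "finite B" using Suc(2) unfolding Inv_def by auto
  have nored: "\<not> (\<exists>H\<in>C_odd. contains_copy R H)" using no_red_odd[OF g] unfolding C_odd_def by blast
  show ?case
  proof (cases "game_over C_odd (Con n m) (R, B)")
    case True
    then obtain H where "H \<in> Con n m" "contains_copy B H" using nored unfolding game_over_def by auto
    then have "real (card R + card B) \<ge> gr * real n + real m - 2*gr + 1" by (intro blue_bound[OF Suc(2) _ _ Suc(4)])
    then show ?thesis by simp
  next
    case False
    then obtain e where e: "is_edge e" "e \<notin> R" "e \<notin> B"
      "builder_wins C_odd (Con n m) k (insert e R, B)" "builder_wins C_odd (Con n m) k (R, insert e B)"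
      using Suc(3) by auto
    from step[OF Suc(2) e(1-3)] show ?thesis
    proof
      assume "Inv (insert e R) B"
      from Suc(1)[OF this e(4) Suc(4)] show ?thesis using finR e by simp
    next
      assume "Inv R (insert e B)"
      from Suc(1)[OF this e(5) Suc(4)] show ?thesis using finR e by simp
    qed
  qed
qed

lemma Inv_empty: "Inv {} {}"
proof -
  have "cmp {} z = {z}" for z
  proof -
    have "adjr {} = {}" unfolding adjr_def by auto
    thus ?thesis unfolding cmp_def by simp
  qed
  hence "good {} {} (\<lambda>_. True)" unfolding good_def by simp
  thus ?thesis unfolding Inv_def by blast
qed

theorem theorem1:
  fixes n m :: nat
  assumes "n \<ge> 1" and "m \<ge> 1" and "n - 1 \<le> m" and "m \<le> n choose 2"
  shows "ereal (golden_ratio * real n + real m - 2 * golden_ratio + 1)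
           \<le> online_ramsey C_odd (Con n m)"
  unfolding online_ramsey_def
proof (rule Inf_greatest)
  fix x assume "x \<in> {ereal (real k) | k. builder_wins C_odd (Con n m) k ({}, {})}"
  then obtain k where k: "x = ereal (real k)" "builder_wins C_odd (Con n m) k ({}, {})" by blast
  have "real (card ({}::nat set set) + card ({}::nat set set) + k) \<ge> gr * real n + real m - 2*gr + 1"
    by (rule game[OF Inv_empty k(2) assms(2)])
  thus "ereal (golden_ratio * real n + real m - 2 * golden_ratio + 1) \<le> x" unfolding k by simp
qed


end
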